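(* For integers $n,m$, the inequality \[ \sin(\pi/m)\,\cosh\!\left(\operatorname{arccosh}\!\left(\frac{\cos(\pi/m)}{\sin(\pi/n)}\right)+\operatorname{arccosh}\bigl(\cot(\pi/m)\cot(\pi/n)\bigr)\right) > \cosh(\log n) \] holds whenever $n\ge 5, m\ge 6$; or $n\ge 7, m\ge 4$. *)

theory Defs
  imports Complex_Main
begin

end

theory Submission
  imports Defs "HOL-Analysis.Complex_Transcendental"
begin

lemma poly1:
  fixes x P :: real
  assumes "x \<ge> 7" "P > 0" "P \<le> 9.93"
  shows "2 * x^3 - 2*x*P - x^2*P - P > 0"
proof -
  obtain t where t: "x = 7 + t" "t \<ge> 0" using assms by (metis add.commute diff_add_cancel diff_ge_0_iff_ge)
  have "2 * x^3 - 2*x*P - x^2*P - P \<ge> 2 * x^3 - 2*x*9.93 - x^2*9.93 - 9.93"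
    using assms by (auto intro!: add_mono mult_left_mono diff_mono)
  moreover have "2 * x^3 - 2*x*9.93 - x^2*9.93 - 9.93 > 0"
  proof -
    have e: "2 * x^3 - 2*x*9.93 - x^2*9.93 - 9.93 = (5048 + 13512*t + 3207*t^2 + 200*t^3)/100"
      unfolding t(1) by (simp add: field_simps power3_eq_cube power2_eq_square)
    have "t^3 \<ge> 0" "t^2 \<ge> 0" using t by auto
    hence "(1752 + 10584*t + 3507*t^2 + 300*t^3) > 0" "(5048 + 13512*t + 3207*t^2 + 200*t^3) > 0"
      using t by linarith+
    thus ?thesis unfolding e by simp
  qed
  ultimately show ?thesis by linarith
qed

lemma poly2:
  fixes x P :: real
  assumes "x \<ge> 5" "P > 0" "P \<le> 9.93"
  shows "3 * x^3 - 2*x*P - x^2*P - P > 0"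
proof -
  obtain t where t: "x = 5 + t" "t \<ge> 0" using assms by (metis add.commute diff_add_cancel diff_ge_0_iff_ge)
  have "3 * x^3 - 2*x*P - x^2*P - P \<ge> 3 * x^3 - 2*x*9.93 - x^2*9.93 - 9.93"
    using assms by (auto intro!: add_mono mult_left_mono diff_mono)
  moreover have "3 * x^3 - 2*x*9.93 - x^2*9.93 - 9.93 > 0"
  proof -
    have e: "3 * x^3 - 2*x*9.93 - x^2*9.93 - 9.93 = (1752 + 10584*t + 3507*t^2 + 300*t^3)/100"
      unfolding t(1) by (simp add: field_simps power3_eq_cube power2_eq_square)
    have "t^3 \<ge> 0" "t^2 \<ge> 0" using t by auto
    hence "(1752 + 10584*t + 3507*t^2 + 300*t^3) > 0" "(5048 + 13512*t + 3207*t^2 + 200*t^3) > 0"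
      using t by linarith+
    thus ?thesis unfolding e by simp
  qed
  ultimately show ?thesis by linarith
qed

theorem proposition2:
  fixes n m :: int
  assumes "(n \<ge> 5 \<and> m \<ge> 6) \<or> (n \<ge> 7 \<and> m \<ge> 4)"
  shows "sin (pi / real_of_int m) *
           cosh (arcosh (cos (pi / real_of_int m) / sin (pi / real_of_int n))
                 + arcosh (cot (pi / real_of_int m) * cot (pi / real_of_int n)))
         > cosh (ln (real_of_int n))"
proof -
  define x where "x = real_of_int n"
  define y where "y = real_of_int m"
  have hxy: "(x \<ge> 5 \<and> y \<ge> 6) \<or> (x \<ge> 7 \<and> y \<ge> 4)" using assms unfolding x_def y_def by auto
  hence x5: "x \<ge> 5" and y4: "y \<ge> 4" by auto
  define a where "a = pi / y"
  define b where "b = pi / x"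
  define c where "c = cos a"
  define s where "s = sin a"
  define u where "u = sin b"
  define w where "w = cos b"
  have a0: "a > 0" and a4: "a \<le> pi/4" using y4 unfolding a_def by (auto simp: field_simps)
  have b0: "b > 0" and b5: "b \<le> pi/5" using x5 unfolding b_def by (auto simp: field_simps)
  have s0: "s > 0" unfolding s_def using a0 a4 by (intro sin_gt_zero) auto
  have c0: "c > 0" unfolding c_def using a0 a4 by (intro cos_gt_zero) auto
  have u0: "u > 0" unfolding u_def using b0 b5 by (intro sin_gt_zero) auto
  have w0: "w > 0" unfolding w_def using b0 b5 by (intro cos_gt_zero) auto
  have w1: "w < 1" unfolding w_def using b0 b5 cos_monotone_0_pi[of 0 b] by auto
  have cu: "c > u"
  proof -
    have "u = cos (pi/2 - b)" unfolding u_def by (simp add: cos_sin_eq)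
    moreover have "cos (pi/2 - b) < cos a" using a0 a4 b0 b5
      by (subst cos_mono_less_eq) auto
    ultimately show ?thesis unfolding c_def by simp
  qed
  have cvsu: "c*w - s*u > 0"
  proof -
    have "c*w - s*u = cos (a+b)" unfolding c_def w_def s_def u_def by (simp add: cos_add)
    moreover have "cos (a+b) > 0" using a0 a4 b0 b5 by (intro cos_gt_zero) auto
    ultimately show ?thesis by simp
  qed
  define A where "A = c / u"
  define B where "B = (c/s) * (w/u)"
  have A1: "A \<ge> 1" unfolding A_def using cu u0 by simp
  have B1: "B \<ge> 1" unfolding B_def using cvsu s0 u0 by (simp add: field_simps)
  have s2: "s^2 = 1 - c^2" unfolding s_def c_def by (simp add: sin_squared_eq)
  have u2: "u^2 = 1 - w^2" unfolding u_def w_def by (simp add: sin_squared_eq)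
  have sA: "sqrt (A^2 - 1) = sqrt (c^2 - u^2) / u"
  proof -
    have "A^2 - 1 = (c^2 - u^2) / u^2" unfolding A_def using u0 by (simp add: field_simps)
    thus ?thesis using u0 by (simp add: real_sqrt_divide)
  qed
  have sB: "sqrt (B^2 - 1) = sqrt (c^2 - u^2) / (s*u)"
  proof -
    have "B^2 - 1 = (c^2*w^2 - s^2*u^2) / (s*u)^2" unfolding B_def using u0 s0
      by (simp add: field_simps power2_eq_square)
    also have "c^2*w^2 - s^2*u^2 = c^2 - u^2"
    proof -
      have w2: "w^2 = 1 - u^2" using u2 by simp
      show ?thesis unfolding w2 s2 by (simp add: algebra_simps)
    qed
    finally show ?thesis using u0 s0 by (simp add: real_sqrt_divide)
  qed
  have "u^2 < c^2" using cu u0 by (intro power_strict_mono) auto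
  hence sq: "sqrt (c^2 - u^2) * sqrt (c^2 - u^2) = c^2 - u^2" using cu u0
    by (intro real_sqrt_mult_self[THEN trans] ) (simp_all add: abs_if)
  have cota: "cot a = c/s" unfolding cot_def c_def s_def ..
  have cotb: "cot b = w/u" unfolding cot_def w_def u_def ..
  have LHS: "sin a * cosh (arcosh (cos a / sin b) + arcosh (cot a * cot b)) = c^2/(1-w) - 1"
  proof -
    have "sin a * cosh (arcosh (cos a / sin b) + arcosh (cot a * cot b))
        = s * (A*B + sqrt (A^2-1) * sqrt (B^2-1))"
      unfolding cota cotb s_def[symmetric] c_def[symmetric] u_def[symmetric] A_def[symmetric]
        B_def[symmetric] using A1 B1 by (simp add: cosh_add sinh_arcosh_real)
    also have "\<dots> = s * (A*B + (c^2 - u^2) / (s*u^2))"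
      unfolding sA sB using sq by (simp add: power2_eq_square)
    also have "\<dots> = (c^2*w + c^2 - u^2) / u^2"
      unfolding A_def B_def using s0 u0 by (simp add: field_simps power2_eq_square)
    also have "\<dots> = (c^2*(1+w) - (1-w)*(1+w)) / ((1-w)*(1+w))"
      unfolding u2 by (simp add: algebra_simps power2_eq_square)
    also have "\<dots> = ((c^2 - (1-w))*(1+w)) / ((1-w)*(1+w))"
      by (simp add: algebra_simps)
    also have "\<dots> = (c^2 - (1-w)) / (1-w)" using w0 w1 by simp
    also have "\<dots> = c^2/(1-w) - 1" using w0 w1 by (simp add: diff_divide_distrib)
    finally show ?thesis .
  qed
  have wb: "1 - w \<le> b^2/2"
  proof -
    have "w = 1 - 2 * sin (b/2)^2" unfolding w_def using cos_double_sin[of "b/2"] by simp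
    moreover have "sin (b/2) \<le> b/2" using b0 by (intro sin_x_le_x) auto
    moreover have "sin (b/2) \<ge> 0" using b0 b5 by (intro sin_ge_zero) auto
    ultimately have "1 - w \<le> 2 * (b/2)^2" by (simp add: power_mono)
    thus ?thesis by (simp add: power2_eq_square)
  qed
  have LB: "c^2/(1-w) \<ge> 2*c^2*x^2/pi^2"
  proof -
    have "c^2/(1-w) \<ge> c^2/(b^2/2)" using w1 c0 wb b0 by (intro divide_left_mono) auto
    moreover have "c^2/(b^2/2) = 2*c^2*x^2/pi^2" unfolding b_def using x5
      by (simp add: field_simps power2_eq_square)
    ultimately show ?thesis by simp
  qed
  define P where "P = pi^2"
  have P0: "P > 0" unfolding P_def by simp
  have P1: "P \<le> 9.93" unfolding P_def using pi_approx power_mono[of pi "3.1415926535899" 2]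
    by (simp add: power2_eq_square)
  have RHS: "cosh (ln x) = (x + 1/x)/2" using x5 by (simp add: cosh_ln_real field_simps)
  have main: "2*c^2*x^2/P - 1 > (x + 1/x)/2"
  proof (cases "x \<ge> 7 \<and> y \<ge> 4")
    case True
    have "c \<ge> cos (pi/4)" unfolding c_def using a0 a4 by (intro cos_monotone_0_pi_le) auto
    hence "c^2 \<ge> (sqrt 2/2)^2" using c0 by (simp add: cos_45 power_mono)
    hence c2: "c^2 \<ge> 1/2" by (simp add: power_divide)
    have "2*c^2*x^2/P \<ge> x^2/P" using c2 P0 mult_right_mono[of 1 "2*c^2" "x^2"] by (intro divide_right_mono) auto
    moreover have "x^2/P - 1 > (x + 1/x)/2"
      using poly1[of x P] True P0 P1 by (simp add: field_simps power3_eq_cube power2_eq_square)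
    ultimately show ?thesis by linarith
  next
    case False
    hence y6: "y \<ge> 6" using hxy by auto
    have a6: "a \<le> pi/6" using y6 unfolding a_def by (auto simp: field_simps)
    have "c \<ge> cos (pi/6)" unfolding c_def using a0 a6 by (intro cos_monotone_0_pi_le) auto
    hence "c^2 \<ge> (sqrt 3/2)^2" using c0 by (simp add: cos_30 power_mono)
    hence c2: "c^2 \<ge> 3/4" by (simp add: power_divide)
    have "2*c^2*x^2/P \<ge> 3/2*x^2/P" using c2 P0 mult_right_mono[of "3/2" "2*c^2" "x^2"] by (intro divide_right_mono) auto
    moreover have "3/2*x^2/P - 1 > (x + 1/x)/2"
      using poly2[of x P] x5 P0 P1 by (simp add: field_simps power3_eq_cube power2_eq_square)
    ultimately show ?thesis by linarith
  qed
  show ?thesis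
    using LHS LB main RHS unfolding a_def[symmetric] b_def[symmetric] x_def[symmetric]
      y_def[symmetric] P_def by linarith
qed

end
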